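(* Let $\boldsymbol{\omega}\in\mathbb{R}^d$ satisfy $|\boldsymbol{\omega}\cdot\boldsymbol{\nu}|>\gamma_0|\boldsymbol{\nu}|^{-\tau}$ for all $\boldsymbol{\nu}\in\mathbb{Z}^d\setminus\{\boldsymbol{0}\}$, with $\gamma_0>0$, $\tau>d-1$, and let $\gamma$ be a constant with $0<\gamma<\min\big\{|\omega_1|,\ldots,|\omega_d|,\ \min_{1\le i<j\le d}\big||\omega_i|-|\omega_j|\big|\big\}$. Let $p\ge2$, $\boldsymbol{\nu}_1,\ldots,\boldsymbol{\nu}_p\in\mathbb{Z}^d$ and $j_1,\ldots,j_p\in\{1,\ldots,d\}$ be such that $|\boldsymbol{\nu}_i-\boldsymbol{\nu}_{i-1}|\le2$ and $\delta_{j_i}(\boldsymbol{\omega}\cdot\boldsymbol{\nu}_i)=\delta_{j_1}(\boldsymbol{\omega}\cdot\boldsymbol{\nu}_1)\le\gamma$ for $i=2,\ldots,p$. Then $|\boldsymbol{\nu}_1-\boldsymbol{\nu}_p|\le2$.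
   Context: $|\boldsymbol{\nu}|=|\nu_1|+\cdots+|\nu_d|$; $\boldsymbol{e}_j$ is the $j$-th standard basis vector. For $j\in\{1,\ldots,d\}$ and $\boldsymbol{\nu}\in\mathbb{Z}^d$, $\delta_j(\boldsymbol{\omega}\cdot\boldsymbol{\nu}):=\min\{|\boldsymbol{\omega}\cdot\boldsymbol{\nu}-\omega_j|,|\boldsymbol{\omega}\cdot\boldsymbol{\nu}+\omega_j|\}$. *)

theory Defs
  imports Complex_Main
begin

text \<open>Vectors in R^d / Z^d are functions on indices, only components 1..d matter.\<close>

definition dotp :: "nat \<Rightarrow> (nat \<Rightarrow> real) \<Rightarrow> (nat \<Rightarrow> int) \<Rightarrow> real" where
  "dotp d \<omega> \<nu> = (\<Sum>k=1..d. \<omega> k * of_int (\<nu> k))"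

definition norm1 :: "nat \<Rightarrow> (nat \<Rightarrow> int) \<Rightarrow> int" where
  "norm1 d \<nu> = (\<Sum>k=1..d. \<bar>\<nu> k\<bar>)"

definition delta :: "(nat \<Rightarrow> real) \<Rightarrow> nat \<Rightarrow> real \<Rightarrow> real" where
  "delta \<omega> j x = min \<bar>x - \<omega> j\<bar> \<bar>x + \<omega> j\<bar>"

end

theory Submission
  imports Defs
begin

definition EE :: "int \<Rightarrow> nat \<Rightarrow> nat \<Rightarrow> int" where
  "EE s j = (\<lambda>k. if k = j then s else 0)"

lemma norm1_cong: "(\<And>k. k \<in> {1..d} \<Longrightarrow> u k = v k) \<Longrightarrow> norm1 d u = norm1 d v"
  unfolding norm1_def by (rule sum.cong) auto

lemma dotp_cong: "(\<And>k. k \<in> {1..d} \<Longrightarrow> u k = v k) \<Longrightarrow> dotp d \<omega> u = dotp d \<omega> v"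
  unfolding dotp_def by (rule sum.cong) auto

lemma norm1_add: "norm1 d (\<lambda>k. u k + v k) \<le> norm1 d u + norm1 d v"
  unfolding norm1_def sum.distrib[symmetric] by (rule sum_mono) (rule abs_triangle_ineq)

lemma norm1_minus: "norm1 d (\<lambda>k. - u k) = norm1 d u"
  unfolding norm1_def by simp

lemma norm1_EE: "j \<in> {1..d} \<Longrightarrow> \<bar>s\<bar> = 1 \<Longrightarrow> norm1 d (EE s j) = 1"
  unfolding norm1_def EE_def by (simp add: if_distrib sum.delta cong: if_cong)

lemma dotp_EE: "j \<in> {1..d} \<Longrightarrow> dotp d \<omega> (EE s j) = \<omega> j * of_int s"
  unfolding dotp_def EE_def by (simp add: if_distrib sum.delta cong: if_cong)

lemma dotp_add: "dotp d \<omega> (\<lambda>k. u k + v k) = dotp d \<omega> u + dotp d \<omega> v"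
  unfolding dotp_def by (simp add: sum.distrib distrib_left)

lemma dotp_diff: "dotp d \<omega> (\<lambda>k. u k - v k) = dotp d \<omega> u - dotp d \<omega> v"
  unfolding dotp_def by (simp add: sum_subtractf right_diff_distrib)

lemma aux: "\<bar>\<bar>a\<bar> - \<bar>b\<bar>\<bar> \<le> \<bar>a + b::real\<bar>"
  by (cases "a \<ge> 0"; cases "b \<ge> 0") auto

lemma L2:
  fixes \<omega> :: "nat \<Rightarrow> real" and w :: "nat \<Rightarrow> int"
  assumes g1: "\<And>i. i \<in> {1..d} \<Longrightarrow> \<gamma> < \<bar>\<omega> i\<bar>"
    and g2: "\<And>i i'. 1 \<le> i \<Longrightarrow> i < i' \<Longrightarrow> i' \<le> d \<Longrightarrow> \<gamma> < \<bar>\<bar>\<omega> i\<bar> - \<bar>\<omega> i'\<bar>\<bar>"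
    and nz: "\<exists>k\<in>{1..d}. w k \<noteq> 0" and n2: "norm1 d w \<le> 2"
  shows "\<bar>dotp d \<omega> w\<bar> > \<gamma>"
proof -
  define S where "S = {k\<in>{1..d}. w k \<noteq> 0}"
  have fS: "finite S" and sub: "S \<subseteq> {1..d}" by (auto simp: S_def)
  have dS: "dotp d \<omega> w = (\<Sum>k\<in>S. \<omega> k * of_int (w k))"
    unfolding dotp_def by (rule sum.mono_neutral_left[symmetric]) (auto simp: S_def)
  have nS: "norm1 d w = (\<Sum>k\<in>S. \<bar>w k\<bar>)"
    unfolding norm1_def by (rule sum.mono_neutral_left[symmetric]) (auto simp: S_def)
  have "int (card S) = (\<Sum>k\<in>S. 1)" by simp
  also have "\<dots> \<le> (\<Sum>k\<in>S. \<bar>w k\<bar>)" by (rule sum_mono) (auto simp: S_def)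
  finally have cS: "card S \<le> 2" using nS n2 by linarith
  have "S \<noteq> {}" using nz by (auto simp: S_def)
  hence "card S \<noteq> 0" using fS by simp
  with cS have "card S = 1 \<or> card S = 2" by linarith
  thus ?thesis
  proof
    assume "card S = 1"
    then obtain k where Sk: "S = {k}" by (auto simp: card_Suc_eq)
    hence k: "k \<in> {1..d}" "w k \<noteq> 0" by (auto simp: S_def)
    have "\<bar>w k\<bar> \<ge> 1" using k by linarith
    hence "\<bar>real_of_int (w k)\<bar> \<ge> 1" by linarith
    hence "\<bar>\<omega> k\<bar> * 1 \<le> \<bar>\<omega> k\<bar> * \<bar>real_of_int (w k)\<bar>" by (intro mult_left_mono) auto
    moreover have "\<gamma> < \<bar>\<omega> k\<bar>" using g1 k by auto
    ultimately show ?thesis using dS Sk by (simp add: abs_mult)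
  next
    assume "card S = 2"
    then obtain k l where Skl: "S = {k,l}" and kl: "k \<noteq> l" by (auto simp: card_Suc_eq numeral_2_eq_2)
    hence k: "k \<in> {1..d}" "w k \<noteq> 0" and l: "l \<in> {1..d}" "w l \<noteq> 0" by (auto simp: S_def)
    have "\<bar>w k\<bar> + \<bar>w l\<bar> \<le> 2" using nS n2 Skl kl by simp
    hence wk: "\<bar>w k\<bar> = 1" and wl: "\<bar>w l\<bar> = 1" using k l by linarith+
    have d2: "dotp d \<omega> w = \<omega> k * of_int (w k) + \<omega> l * of_int (w l)" using dS Skl kl by simp
    have rk: "\<bar>real_of_int (w k)\<bar> = 1" using wk by (metis of_int_abs of_int_1)
    have rl: "\<bar>real_of_int (w l)\<bar> = 1" using wl by (metis of_int_abs of_int_1)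
    have a1: "\<bar>\<omega> k * of_int (w k)\<bar> = \<bar>\<omega> k\<bar>" using rk by (simp add: abs_mult)
    have a2: "\<bar>\<omega> l * of_int (w l)\<bar> = \<bar>\<omega> l\<bar>" using rl by (simp add: abs_mult)
    have "\<gamma> < \<bar>\<bar>\<omega> k\<bar> - \<bar>\<omega> l\<bar>\<bar>"
    proof (cases "k < l")
      case True thus ?thesis using g2[of k l] k l by auto
    next
      case False hence "l < k" using kl by simp
      thus ?thesis using g2[of l k] k l by auto
    qed
    moreover have "\<bar>\<bar>\<omega> k\<bar> - \<bar>\<omega> l\<bar>\<bar> \<le> \<bar>\<omega> k * of_int (w k) + \<omega> l * of_int (w l)\<bar>"
      using a1 a2 aux[of "\<omega> k * of_int (w k)" "\<omega> l * of_int (w l)"] by simp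
    ultimately show ?thesis using d2 by linarith
  qed
qed

theorem lemma3p4:
  fixes d p :: nat and \<omega> :: "nat \<Rightarrow> real" and \<gamma>\<^sub>0 \<tau> \<gamma> :: real
    and \<nu> :: "nat \<Rightarrow> nat \<Rightarrow> int" and j :: "nat \<Rightarrow> nat"
  assumes dioph: "\<And>\<mu> :: nat \<Rightarrow> int. (\<exists>k\<in>{1..d}. \<mu> k \<noteq> 0) \<Longrightarrow>
                    \<bar>dotp d \<omega> \<mu>\<bar> > \<gamma>\<^sub>0 * (real_of_int (norm1 d \<mu>)) powr (- \<tau>)"
    and g0: "\<gamma>\<^sub>0 > 0" and tau: "\<tau> > real d - 1"
    and gpos: "0 < \<gamma>"
    and g1: "\<And>i. i \<in> {1..d} \<Longrightarrow> \<gamma> < \<bar>\<omega> i\<bar>"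
    and g2: "\<And>i i'. 1 \<le> i \<Longrightarrow> i < i' \<Longrightarrow> i' \<le> d \<Longrightarrow> \<gamma> < \<bar>\<bar>\<omega> i\<bar> - \<bar>\<omega> i'\<bar>\<bar>"
    and p2: "p \<ge> 2"
    and jr: "\<And>i. i \<in> {1..p} \<Longrightarrow> j i \<in> {1..d}"
    and steps: "\<And>i. i \<in> {2..p} \<Longrightarrow> norm1 d (\<lambda>k. \<nu> i k - \<nu> (i - 1) k) \<le> 2"
    and deq: "\<And>i. i \<in> {2..p} \<Longrightarrow>
               delta \<omega> (j i) (dotp d \<omega> (\<nu> i)) = delta \<omega> (j 1) (dotp d \<omega> (\<nu> 1))"
    and dle: "delta \<omega> (j 1) (dotp d \<omega> (\<nu> 1)) \<le> \<gamma>"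
  shows "norm1 d (\<lambda>k. \<nu> 1 k - \<nu> p k) \<le> 2"
proof -
  define \<delta> where "\<delta> = delta \<omega> (j 1) (dotp d \<omega> (\<nu> 1))"
  have L1: "\<forall>k\<in>{1..d}. u k = 0" if "dotp d \<omega> u = 0" for u
  proof (rule ccontr)
    assume "\<not> ?thesis"
    hence "\<bar>dotp d \<omega> u\<bar> > \<gamma>\<^sub>0 * (real_of_int (norm1 d u)) powr (- \<tau>)" using dioph by blast
    moreover have "\<gamma>\<^sub>0 * (real_of_int (norm1 d u)) powr (- \<tau>) \<ge> 0" using g0 by simp
    ultimately show False using that by simp
  qed
  have ex: "\<exists>s e. \<bar>s::int\<bar> = 1 \<and> \<bar>e::real\<bar> = 1 \<and> dotp d \<omega> (\<nu> i) = \<omega> (j i) * of_int s + e * \<delta>"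
    if i: "i \<in> {1..p}" for i
  proof -
    have dd: "delta \<omega> (j i) (dotp d \<omega> (\<nu> i)) = \<delta>"
      using deq[of i] i unfolding \<delta>_def by (cases "i = 1") auto
    define x where "x = dotp d \<omega> (\<nu> i)"
    have "min \<bar>x - \<omega> (j i)\<bar> \<bar>x + \<omega> (j i)\<bar> = \<delta>" using dd unfolding delta_def x_def .
    hence "\<bar>x - \<omega> (j i)\<bar> = \<delta> \<or> \<bar>x + \<omega> (j i)\<bar> = \<delta>" by (auto simp: min_def split: if_splits)
    thus ?thesis
    proof
      assume h: "\<bar>x - \<omega> (j i)\<bar> = \<delta>"
      show ?thesis
      proof (cases "x - \<omega> (j i) \<ge> 0")
        case True thus ?thesis using h x_def by (intro exI[of _ 1] exI[of _ 1]) auto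
      next
        case False thus ?thesis using h x_def by (intro exI[of _ 1] exI[of _ "-1"]) auto
      qed
    next
      assume h: "\<bar>x + \<omega> (j i)\<bar> = \<delta>"
      show ?thesis
      proof (cases "x + \<omega> (j i) \<ge> 0")
        case True thus ?thesis using h x_def by (intro exI[of _ "-1"] exI[of _ 1]) auto
      next
        case False thus ?thesis using h x_def by (intro exI[of _ "-1"] exI[of _ "-1"]) auto
      qed
    qed
  qed
  obtain s e where se: "\<And>i. i \<in> {1..p} \<Longrightarrow> \<bar>s i::int\<bar> = 1 \<and> \<bar>e i::real\<bar> = 1 \<and>
      dotp d \<omega> (\<nu> i) = \<omega> (j i) * of_int (s i) + e i * \<delta>"
    using ex by metis
  define w where "w i = (\<lambda>k. \<nu> i k - EE (s i) (j i) k)" for i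
  have dw: "dotp d \<omega> (w i) = e i * \<delta>" if "i \<in> {1..p}" for i
    using se[OF that] dotp_EE[OF jr[OF that], of \<omega> "s i"] unfolding w_def dotp_diff by simp
  have dle': "\<delta> \<le> \<gamma>" using dle \<delta>_def by simp
  have dnn: "\<delta> \<ge> 0" unfolding \<delta>_def delta_def by simp
  have claim: "dotp d \<omega> (w (Suc n)) = dotp d \<omega> (w 1)" if "Suc n \<le> p" for n
    using that
  proof (induction n)
    case 0 thus ?case by simp
  next
    case (Suc n)
    define i where "i = Suc n"
    have i1: "i \<in> {1..p}" and i2: "Suc i \<in> {1..p}" "Suc i \<in> {2..p}" using Suc.prems by (auto simp: i_def)
    have IH: "dotp d \<omega> (w i) = dotp d \<omega> (w 1)" using Suc by (simp add: i_def)
    show ?case unfolding i_def[symmetric]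
    proof (rule ccontr)
      assume ne: "dotp d \<omega> (w (Suc i)) \<noteq> dotp d \<omega> (w 1)"
      have ei: "\<bar>e i\<bar> = 1" "\<bar>e (Suc i)\<bar> = 1" using se i1 i2 by auto
      have opp: "dotp d \<omega> (w (Suc i)) = - dotp d \<omega> (w i)" and c0: "dotp d \<omega> (w i) \<noteq> 0"
        using ne IH dw[OF i1] dw[OF i2(1)] ei by (auto simp: abs_if split: if_splits)
      have "dotp d \<omega> (\<lambda>k. w (Suc i) k + w i k) = 0" using opp by (simp add: dotp_add)
      hence wz: "\<forall>k\<in>{1..d}. w (Suc i) k = - w i k" using L1 by fastforce
      have st: "norm1 d (\<lambda>k. \<nu> (Suc i) k - \<nu> i k) \<le> 2" using steps[OF i2(2)] by simp
      have eq: "norm1 d (\<lambda>k. - (2 * w i k)) = norm1 d (\<lambda>k. (\<nu> (Suc i) k - \<nu> i k) +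
               ((- EE (s (Suc i)) (j (Suc i)) k) + EE (s i) (j i) k))"
        by (rule norm1_cong) (use wz in \<open>auto simp: w_def\<close>)
      have n1: "norm1 d (\<lambda>k. (- EE (s (Suc i)) (j (Suc i)) k) + EE (s i) (j i) k) \<le> 2"
        using norm1_add[of d "\<lambda>k. - EE (s (Suc i)) (j (Suc i)) k" "EE (s i) (j i)"]
          norm1_minus[of d "EE (s (Suc i)) (j (Suc i))"]
          norm1_EE[OF jr[OF i1], of "s i"] norm1_EE[OF jr[OF i2(1)], of "s (Suc i)"] se[OF i1] se[OF i2(1)]
        by simp
      have "norm1 d (\<lambda>k. - (2 * w i k)) \<le> 4"
        using eq norm1_add[of d "\<lambda>k. \<nu> (Suc i) k - \<nu> i k" "\<lambda>k. (- EE (s (Suc i)) (j (Suc i)) k) + EE (s i) (j i) k"]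
          st n1 by linarith
      moreover have "norm1 d (\<lambda>k. - (2 * w i k)) = 2 * norm1 d (w i)"
        unfolding norm1_def by (simp add: abs_mult sum_distrib_left)
      ultimately have nw: "norm1 d (w i) \<le> 2" by simp
      have nz: "\<exists>k\<in>{1..d}. w i k \<noteq> 0"
      proof (rule ccontr)
        assume "\<not> ?thesis"
        hence "dotp d \<omega> (w i) = 0" unfolding dotp_def by simp
        with c0 show False by simp
      qed
      have "\<bar>dotp d \<omega> (w i)\<bar> > \<gamma>" by (rule L2[OF g1 g2 nz nw]) auto
      moreover have "\<bar>dotp d \<omega> (w i)\<bar> \<le> \<gamma>" using dw[OF i1] ei dle' dnn by (simp add: abs_mult)
      ultimately show False by simp
    qed
  qed
  have pp: "p \<in> {1..p}" "1 \<in> {1..p}" using p2 by auto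
  have "dotp d \<omega> (\<lambda>k. w 1 k - w p k) = 0"
    using claim[of "p - 1"] p2 by (simp add: dotp_diff)
  hence z: "\<forall>k\<in>{1..d}. w 1 k - w p k = 0" using L1 by blast
  have "norm1 d (\<lambda>k. \<nu> 1 k - \<nu> p k) = norm1 d (\<lambda>k. EE (s 1) (j 1) k + (- EE (s p) (j p) k))"
  proof (rule norm1_cong)
    fix k assume k: "k \<in> {1..d}"
    from z k have "\<nu> 1 k - EE (s 1) (j 1) k - (\<nu> p k - EE (s p) (j p) k) = 0" by (simp add: w_def)
    thus "\<nu> 1 k - \<nu> p k = EE (s 1) (j 1) k + (- EE (s p) (j p) k)" by linarith
  qed
  also have "\<dots> \<le> 2"
    using norm1_add[of d "EE (s 1) (j 1)" "\<lambda>k. - EE (s p) (j p) k"]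
          norm1_minus[of d "EE (s p) (j p)"]
          norm1_EE[OF jr[OF pp(2)], of "s 1"] norm1_EE[OF jr[OF pp(1)], of "s p"] se[OF pp(1)] se[OF pp(2)]
    by simp
  finally show ?thesis .
qed

end
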